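(* Let $m,\delta$ be positive integers, let $X=\{x_1,\dots,x_m\}$ be a set of numbers with $x_1>x_2>\dots>x_m\ge 0$, and let $\alpha=(\alpha_1,\dots,\alpha_\ell)$ be a $\delta$-deviation set of size $m$. Put $c_0=0$ and $c_j=\sum_{1\le i\le j}\alpha_i$ for $j\ge 1$, and $$\Delta(X,\alpha)=\Big|\sum_{j=0}^{\ell-1}(-1)^j\sum_{c_j<i\le c_{j+1}}x_i\Big|.$$ Then $\Delta(X,\alpha)\le \delta\cdot x_1$.
   Context: For positive integers $m$ and $\delta$, a $\delta$-deviation set of size $m$ is a finite sequence $(\alpha_1,\alpha_2,\dots,\alpha_\ell)$ of positive integers such that (i) $\sum_i\alpha_i=m$; (ii) $\big|\sum_i\alpha_{2i-1}-\sum_i\alpha_{2i}\big|\le 1$; (iii) $\big|\sum_{1\le i\le j}(-1)^{i-1}\alpha_i\big|\le\delta$ for every $j\ge 1$. *)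

theory Defs
  imports Complex_Main
begin

(* A delta-deviation set of size m: a list alpha = [alpha_1,...,alpha_l] of positive integers
   (alpha_i = alpha ! (i-1)) satisfying conditions (i)-(iii). *)
definition deviation_set :: "nat \<Rightarrow> nat \<Rightarrow> nat list \<Rightarrow> bool" where
  "deviation_set \<delta> m \<alpha> \<longleftrightarrow>
     (\<forall>a \<in> set \<alpha>. a > 0) \<and>
     sum_list \<alpha> = m \<and>
     \<bar>(\<Sum>i<length \<alpha>. (-1::int) ^ i * int (\<alpha> ! i))\<bar> \<le> 1 \<and>
     (\<forall>j\<ge>1. \<bar>(\<Sum>i<min j (length \<alpha>). (-1::int) ^ i * int (\<alpha> ! i))\<bar> \<le> int \<delta>)"

definition cpart :: "nat list \<Rightarrow> nat \<Rightarrow> nat" where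
  "cpart \<alpha> j = sum_list (take j \<alpha>)"

definition Delta :: "(nat \<Rightarrow> real) \<Rightarrow> nat list \<Rightarrow> real" where
  "Delta x \<alpha> = \<bar>\<Sum>j<length \<alpha>. (-1::real) ^ j * (\<Sum>i\<in>{cpart \<alpha> j <.. cpart \<alpha> (Suc j)}. x i)\<bar>"

end

theory Submission
  imports Defs
begin

lemma block_step:
  fixes y :: "nat \<Rightarrow> real" and \<sigma> P0 T d A :: real
  assumes mono: "\<And>k. a \<le> k \<Longrightarrow> k < a + len \<Longrightarrow> y (Suc k) \<le> y k"
    and sig: "\<sigma> = 1 \<or> \<sigma> = -1"
    and b0: "\<bar>P0\<bar> \<le> d" and b1: "\<bar>P0 + \<sigma> * real len\<bar> \<le> d"
    and inv: "\<bar>T - P0 * y a\<bar> \<le> d * (A - y a)"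
  shows "\<bar>T + \<sigma> * (\<Sum>i\<in>{a<..a+len}. y i) - (P0 + \<sigma> * real len) * y (a+len)\<bar> \<le> d * (A - y (a+len))"
proof -
  have "t \<le> len \<Longrightarrow> \<bar>T + \<sigma> * (\<Sum>i\<in>{a<..a+t}. y i) - (P0 + \<sigma> * real t) * y (a+t)\<bar> \<le> d * (A - y (a+t))" for t
  proof (induction t)
    case 0
    then show ?case using inv by simp
  next
    case (Suc t)
    have IH: "\<bar>T + \<sigma> * (\<Sum>i\<in>{a<..a+t}. y i) - (P0 + \<sigma> * real t) * y (a+t)\<bar> \<le> d * (A - y (a+t))"
      using Suc by simp
    have bt: "\<bar>P0 + \<sigma> * real t\<bar> \<le> d"
      using sig b0 b1 Suc.prems by (auto simp: abs_le_iff)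
    have mt: "y (Suc (a+t)) \<le> y (a+t)" using mono Suc.prems by simp
    have split: "(\<Sum>i\<in>{a<..a+Suc t}. y i) = (\<Sum>i\<in>{a<..a+t}. y i) + y (Suc (a+t))"
    proof -
      have "{a<..a+Suc t} = insert (Suc (a+t)) {a<..a+t}" by auto
      then show ?thesis by simp
    qed
    have eq: "T + \<sigma> * (\<Sum>i\<in>{a<..a+Suc t}. y i) - (P0 + \<sigma> * real (Suc t)) * y (a + Suc t)
      = (T + \<sigma> * (\<Sum>i\<in>{a<..a+t}. y i) - (P0 + \<sigma> * real t) * y (a+t))
        + (P0 + \<sigma> * real t) * (y (a+t) - y (Suc (a+t)))"
      unfolding split by (simp add: algebra_simps)
    have "\<bar>(P0 + \<sigma> * real t) * (y (a+t) - y (Suc (a+t)))\<bar> \<le> d * (y (a+t) - y (Suc (a+t)))"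
      using bt mt by (simp add: abs_mult mult_right_mono)
    then show ?case unfolding eq using IH abs_triangle_ineq[of "T + \<sigma> * (\<Sum>i\<in>{a<..a+t}. y i) - (P0 + \<sigma> * real t) * y (a+t)" "(P0 + \<sigma> * real t) * (y (a+t) - y (Suc (a+t)))"]
      by (simp add: algebra_simps)
  qed
  then show ?thesis by simp
qed

lemma cpart_Suc: "j < length \<alpha> \<Longrightarrow> cpart \<alpha> (Suc j) = cpart \<alpha> j + \<alpha> ! j"
  unfolding cpart_def by (simp add: take_Suc_conv_app_nth)

lemma cpart_le: "cpart \<alpha> j \<le> sum_list \<alpha>"
proof -
  have "sum_list \<alpha> = sum_list (take j \<alpha>) + sum_list (drop j \<alpha>)"
    by (metis append_take_drop_id sum_list_append)
  then show ?thesis unfolding cpart_def by simp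
qed

theorem lemma1:
  fixes m \<delta> :: nat and x :: "nat \<Rightarrow> real" and \<alpha> :: "nat list"
  assumes "m > 0" and "\<delta> > 0"
    and "\<And>i. 1 \<le> i \<Longrightarrow> i < m \<Longrightarrow> x i > x (Suc i)"
    and "x m \<ge> 0"
    and "deviation_set \<delta> m \<alpha>"
  shows "Delta x \<alpha> \<le> real \<delta> * x 1"
proof -
  define y where "y k = (if k = 0 then x 1 else x k)" for k
  define T where "T j = (\<Sum>j'<j. (-1::real) ^ j' * (\<Sum>i\<in>{cpart \<alpha> j' <.. cpart \<alpha> (Suc j')}. x i))" for j
  define Q where "Q j = (\<Sum>i<j. (-1::real) ^ i * real (\<alpha> ! i))" for j
  have sl: "sum_list \<alpha> = m" and dev: "\<And>j. j \<ge> 1 \<Longrightarrow>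
      \<bar>(\<Sum>i<min j (length \<alpha>). (-1::int) ^ i * int (\<alpha> ! i))\<bar> \<le> int \<delta>"
    using assms(5) unfolding deviation_set_def by auto
  have ymono: "k < m \<Longrightarrow> y (Suc k) \<le> y k" for k
    using assms(3)[of k] unfolding y_def by (cases "k = 0") auto
  have Qb: "j \<le> length \<alpha> \<Longrightarrow> \<bar>Q j\<bar> \<le> real \<delta>" for j
  proof (cases "j = 0")
    case True then show ?thesis by (simp add: Q_def)
  next
    case False
    assume j: "j \<le> length \<alpha>"
    have "\<bar>(\<Sum>i<j. (-1::int) ^ i * int (\<alpha> ! i))\<bar> \<le> int \<delta>"
      using dev[of j] False j by (simp add: min_absorb1)
    then have "\<bar>real_of_int (\<Sum>i<j. (-1::int) ^ i * int (\<alpha> ! i))\<bar> \<le> real \<delta>"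
      by linarith
    then show ?thesis unfolding Q_def by simp
  qed
  have main: "j \<le> length \<alpha> \<Longrightarrow> \<bar>T j - Q j * y (cpart \<alpha> j)\<bar> \<le> real \<delta> * (x 1 - y (cpart \<alpha> j))" for j
  proof (induction j)
    case 0
    then show ?case by (simp add: T_def Q_def cpart_def y_def)
  next
    case (Suc j)
    have jl: "j < length \<alpha>" using Suc.prems by simp
    define a where "a = cpart \<alpha> j"
    define len where "len = \<alpha> ! j"
    define \<sigma> where "\<sigma> = (-1::real) ^ j"
    have cS: "cpart \<alpha> (Suc j) = a + len" using cpart_Suc[OF jl] a_def len_def by simp
    have le_m: "a + len \<le> m" using cpart_le[of \<alpha> "Suc j"] cS sl by simp
    have mono: "\<And>k. a \<le> k \<Longrightarrow> k < a + len \<Longrightarrow> y (Suc k) \<le> y k" using ymono le_m by simp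
    have sig: "\<sigma> = 1 \<or> \<sigma> = -1" unfolding \<sigma>_def by (simp add: minus_one_power_iff)
    have QS: "Q (Suc j) = Q j + \<sigma> * real len" by (simp add: Q_def \<sigma>_def len_def)
    have sumeq: "(\<Sum>i\<in>{a<..a+len}. x i) = (\<Sum>i\<in>{a<..a+len}. y i)"
      by (rule sum.cong) (auto simp: y_def)
    have TS: "T (Suc j) = T j + \<sigma> * (\<Sum>i\<in>{a<..a+len}. y i)"
      using cS sumeq by (simp add: T_def \<sigma>_def a_def)
    have "\<bar>T j + \<sigma> * (\<Sum>i\<in>{a<..a+len}. y i) - (Q j + \<sigma> * real len) * y (a+len)\<bar>
          \<le> real \<delta> * (x 1 - y (a+len))"
      apply (rule block_step[where y=y and a=a and len=len, OF mono sig])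
      using Qb[of j] Qb[of "Suc j"] QS Suc a_def by auto
    then show ?case using TS QS cS by simp
  qed
  have l: "length \<alpha> \<ge> 1" using sl assms(1) by (cases \<alpha>) auto
  have cl: "cpart \<alpha> (length \<alpha>) = m" using sl by (simp add: cpart_def)
  have ym: "y m = x m" using assms(1) by (simp add: y_def)
  have M: "\<bar>T (length \<alpha>) - Q (length \<alpha>) * x m\<bar> \<le> real \<delta> * (x 1 - x m)"
    using main[of "length \<alpha>"] cl ym by simp
  have "\<bar>Q (length \<alpha>) * x m\<bar> \<le> real \<delta> * x m"
    using Qb[of "length \<alpha>"] assms(4) by (simp add: abs_mult mult_right_mono)
  then have "\<bar>T (length \<alpha>)\<bar> \<le> real \<delta> * x 1" using M by (simp add: algebra_simps)
  then show ?thesis unfolding Delta_def T_def by simp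
qed

end
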